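(* A filter $D$ on $\omega$ is not nowhere dense if and only if there is a function $f\colon\omega\to{}^{\omega>}2$ such that for every $B\in D$ the set $f(B)$ is somewhere dense.
   Context: ${}^{\omega>}2$ is the set of finite $0$-$1$ sequences; for $\eta,\nu\in{}^{\omega>}2$, $\eta^\frown\nu$ is their concatenation and $\eta\unlhd\varrho$ means $\varrho$ extends $\eta$. A set $X\subseteq{}^{\omega>}2$ is somewhere dense if there is $\eta\in{}^{\omega>}2$ such that for every $\nu\in{}^{\omega>}2$ there is $\varrho\in X$ with $\eta^\frown\nu\unlhd\varrho$. A filter $D$ on $\omega$ is nowhere dense if for every function $f\colon\omega\to{}^\omega 2$ there is $A\in D$ such that $f(A)$ is nowhere dense in the Cantor set ${}^\omega 2$. *)

theory Defs
  imports "HOL-Analysis.Analysis" "HOL-Library.Sublist"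
begin

text \<open>Finite 0-1 sequences are represented as bool lists; the Cantor set as nat \<Rightarrow> bool
  with the product of discrete topologies on {False, True}.\<close>

definition cantor_top :: "(nat \<Rightarrow> bool) topology" where
  "cantor_top = product_topology (\<lambda>_. discrete_topology (UNIV :: bool set)) UNIV"

definition nowhere_dense_cantor :: "(nat \<Rightarrow> bool) set \<Rightarrow> bool" where
  "nowhere_dense_cantor S \<longleftrightarrow> cantor_top interior_of (cantor_top closure_of S) = {}"

definition somewhere_dense_seq :: "bool list set \<Rightarrow> bool" where
  "somewhere_dense_seq X \<longleftrightarrow> (\<exists>\<eta>. \<forall>\<nu>. \<exists>\<rho>\<in>X. prefix (\<eta> @ \<nu>) \<rho>)"

definition nowhere_dense_filter :: "nat filter \<Rightarrow> bool" where
  "nowhere_dense_filter D \<longleftrightarrow>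
     (\<forall>f :: nat \<Rightarrow> (nat \<Rightarrow> bool). \<exists>A. eventually (\<lambda>n. n \<in> A) D \<and> nowhere_dense_cantor (f ` A))"

end

theory Submission
  imports Defs
begin

definition cyl :: "bool list \<Rightarrow> (nat \<Rightarrow> bool) set" where
  "cyl w = {x. \<forall>i<length w. x i = w ! i}"

definition pre :: "(nat \<Rightarrow> bool) \<Rightarrow> nat \<Rightarrow> bool list" where
  "pre x n = map x [0..<n]"

definition ext :: "bool list \<Rightarrow> nat \<Rightarrow> bool" where
  "ext w = (\<lambda>i. if i < length w then w ! i else False)"

lemma topspace_cantor [simp]: "topspace cantor_top = UNIV"
  by (simp add: cantor_top_def)

lemma cyl_eq: "cyl w = Pi\<^sub>E UNIV (\<lambda>i. if i < length w then {w ! i} else UNIV)"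
  by (auto simp: cyl_def PiE_iff split: if_splits)

lemma open_cyl: "openin cantor_top (cyl w)"
  unfolding cantor_top_def openin_product_topology_alt
proof
  fix x assume x: "x \<in> cyl w"
  let ?U = "\<lambda>i. if i < length w then {w ! i} else (UNIV::bool set)"
  have "{i \<in> UNIV. ?U i \<noteq> topspace (discrete_topology UNIV)} \<subseteq> {..<length w}"
    by auto
  then have "finite {i \<in> UNIV. ?U i \<noteq> topspace (discrete_topology UNIV)}"
    using finite_subset by blast
  then show "\<exists>U. finite {i \<in> UNIV. U i \<noteq> topspace (discrete_topology UNIV)} \<and>
             (\<forall>i\<in>UNIV. openin (discrete_topology UNIV) (U i)) \<and> x \<in> Pi\<^sub>E UNIV U \<and> Pi\<^sub>E UNIV U \<subseteq> cyl w"
    using x by (intro exI[of _ ?U]) (auto simp: cyl_eq)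
qed

lemma cyl_nbhd:
  assumes "openin cantor_top T" "x \<in> T"
  shows "\<exists>L. \<forall>L'\<ge>L. cyl (pre x L') \<subseteq> T"
proof -
  obtain U where U: "finite {i \<in> UNIV. U i \<noteq> topspace (discrete_topology (UNIV::bool set))}"
    "x \<in> Pi\<^sub>E UNIV U" "Pi\<^sub>E UNIV U \<subseteq> T"
    using assms unfolding cantor_top_def openin_product_topology_alt by blast
  then have fin: "finite {i. U i \<noteq> UNIV}" by simp
  obtain L where L: "\<And>i. i \<in> {i. U i \<noteq> UNIV} \<Longrightarrow> i < L"
    using finite_nat_bounded[OF fin] by blast
  show ?thesis
  proof (intro exI allI impI)
    fix L' assume "L \<le> L'"
    show "cyl (pre x L') \<subseteq> T"
    proof
      fix y assume y: "y \<in> cyl (pre x L')"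
      have "y \<in> Pi\<^sub>E UNIV U"
      proof (auto simp: PiE_iff)
        fix i
        show "y i \<in> U i"
        proof (cases "i < L")
          case True
          then have "y i = x i" using y \<open>L \<le> L'\<close> by (auto simp: cyl_def pre_def)
          then show ?thesis using U(2) by auto
        next
          case False
          then have "U i = UNIV" using L by force
          then show ?thesis by simp
        qed
      qed
      then show "y \<in> T" using U(3) by blast
    qed
  qed
qed

lemma x_in_cyl_pre: "x \<in> cyl (pre x L)"
  by (simp add: cyl_def pre_def)

lemma prefix_pre: "prefix w (pre y n) \<longleftrightarrow> length w \<le> n \<and> y \<in> cyl w"
proof
  assume "prefix w (pre y n)"
  then obtain zs where z: "pre y n = w @ zs" by (auto simp: prefix_def)
  then have len: "length w \<le> n" by (metis le_add1 length_append length_map length_upt minus_nat.diff_0 pre_def)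
  have "\<forall>i<length w. y i = w ! i"
  proof (intro allI impI)
    fix i assume "i < length w"
    then have "(pre y n) ! i = w ! i" using z by (simp add: nth_append)
    then show "y i = w ! i" using len \<open>i < length w\<close> by (simp add: pre_def)
  qed
  then show "length w \<le> n \<and> y \<in> cyl w" using len by (simp add: cyl_def)
next
  assume a: "length w \<le> n \<and> y \<in> cyl w"
  have "take (length w) (pre y n) = w"
    using a by (intro nth_equalityI) (auto simp: pre_def cyl_def)
  then show "prefix w (pre y n)"
    by (metis append_take_drop_id prefixI)
qed

lemma cyl_prefix: "prefix w v \<Longrightarrow> cyl v \<subseteq> cyl w"
  by (auto simp: cyl_def prefix_def nth_append)

lemma ext_in_cyl: "prefix w v \<Longrightarrow> ext v \<in> cyl w"
  by (auto simp: cyl_def ext_def prefix_def nth_append)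

theorem mainTheorem3:
  fixes D :: "nat filter"
  shows "\<not> nowhere_dense_filter D \<longleftrightarrow>
    (\<exists>f :: nat \<Rightarrow> bool list. \<forall>B. eventually (\<lambda>n. n \<in> B) D \<longrightarrow> somewhere_dense_seq (f ` B))"
proof
  assume "\<not> nowhere_dense_filter D"
  then obtain g :: "nat \<Rightarrow> nat \<Rightarrow> bool" where
    g: "\<And>A. eventually (\<lambda>n. n \<in> A) D \<Longrightarrow> \<not> nowhere_dense_cantor (g ` A)"
    unfolding nowhere_dense_filter_def by blast
  show "\<exists>f :: nat \<Rightarrow> bool list. \<forall>B. eventually (\<lambda>n. n \<in> B) D \<longrightarrow> somewhere_dense_seq (f ` B)"
  proof (intro exI allI impI)
    fix B assume B: "eventually (\<lambda>n. n \<in> B) D"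
    then obtain x where "x \<in> cantor_top interior_of (cantor_top closure_of (g ` B))"
      using g unfolding nowhere_dense_cantor_def by blast
    then obtain T where T: "openin cantor_top T" "x \<in> T" "T \<subseteq> cantor_top closure_of (g ` B)"
      unfolding interior_of_def by blast
    obtain L where L: "cyl (pre x L) \<subseteq> T" using cyl_nbhd[OF T(1,2)] by blast
    show "somewhere_dense_seq ((\<lambda>n. pre (g n) n) ` B)"
      unfolding somewhere_dense_seq_def
    proof (intro exI allI)
      fix \<nu>
      define e where "e = pre x L @ \<nu>"
      define m where "m = length e"
      define y where "y = (\<lambda>i. if i < m then e ! i else if i < 2*m then \<not> g (i-m) i else False)"
      define w where "w = pre y (2*m)"
      have yw: "y \<in> cyl w" unfolding w_def by (rule x_in_cyl_pre)
      have "prefix e w" unfolding w_def prefix_pre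
        by (auto simp: y_def m_def cyl_def)
      then have "cyl w \<subseteq> cyl e" by (rule cyl_prefix)
      moreover have "cyl e \<subseteq> cyl (pre x L)" unfolding e_def by (rule cyl_prefix) simp
      ultimately have sub: "cyl w \<subseteq> cantor_top closure_of (g ` B)" using L T(3) by blast
      then have "y \<in> cantor_top closure_of (g ` B)" using yw by blast
      then obtain z where z: "z \<in> g ` B" "z \<in> cyl w"
        using open_cyl[of w] yw unfolding in_closure_of by blast
      then obtain n where n: "n \<in> B" "z = g n" by blast
      have "m \<le> n"
      proof (rule ccontr)
        assume "\<not> m \<le> n"
        then have i: "m + n < length w" by (simp add: w_def pre_def)
        then have "z (m+n) = w ! (m+n)" using z(2) by (simp add: cyl_def)
        also have "\<dots> = y (m+n)" using i by (simp add: w_def pre_def)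
        also have "\<dots> = (\<not> g n (m+n))" using \<open>\<not> m \<le> n\<close> by (simp add: y_def)
        finally show False using n by simp
      qed
      moreover have "g n \<in> cyl e" using z(2) n(2) \<open>cyl w \<subseteq> cyl e\<close> by auto
      ultimately have "prefix e (pre (g n) n)" unfolding prefix_pre m_def by simp
      then show "\<exists>\<rho>\<in>(\<lambda>n. pre (g n) n) ` B. prefix (pre x L @ \<nu>) \<rho>"
        using n(1) unfolding e_def by blast
    qed
  qed
next
  assume "\<exists>f :: nat \<Rightarrow> bool list. \<forall>B. eventually (\<lambda>n. n \<in> B) D \<longrightarrow> somewhere_dense_seq (f ` B)"
  then obtain f :: "nat \<Rightarrow> bool list" where
    f: "\<And>B. eventually (\<lambda>n. n \<in> B) D \<Longrightarrow> somewhere_dense_seq (f ` B)" by blast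
  show "\<not> nowhere_dense_filter D"
  proof
    assume "nowhere_dense_filter D"
    then obtain A where A: "eventually (\<lambda>n. n \<in> A) D"
      "nowhere_dense_cantor ((\<lambda>n. ext (f n)) ` A)"
      unfolding nowhere_dense_filter_def by blast
    obtain \<eta> where eta: "\<And>\<nu>. \<exists>\<rho>\<in>f ` A. prefix (\<eta> @ \<nu>) \<rho>"
      using f[OF A(1)] unfolding somewhere_dense_seq_def by blast
    have "cyl \<eta> \<subseteq> cantor_top closure_of ((\<lambda>n. ext (f n)) ` A)"
    proof
      fix x assume x: "x \<in> cyl \<eta>"
      show "x \<in> cantor_top closure_of ((\<lambda>n. ext (f n)) ` A)"
        unfolding in_closure_of
      proof (intro conjI allI impI)
        fix T assume T: "x \<in> T \<and> openin cantor_top T"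
        then obtain L where L: "\<And>L'. L' \<ge> L \<Longrightarrow> cyl (pre x L') \<subseteq> T"
          using cyl_nbhd by blast
        define L' where "L' = max L (length \<eta>)"
        have pe: "prefix \<eta> (pre x L')" unfolding prefix_pre L'_def using x by simp
        then obtain \<nu> where nu: "pre x L' = \<eta> @ \<nu>" by (auto simp: prefix_def)
        obtain n where n: "n \<in> A" "prefix (\<eta> @ \<nu>) (f n)" using eta[of \<nu>] by blast
        have "ext (f n) \<in> cyl (pre x L')" using n(2) nu ext_in_cyl by metis
        then have "ext (f n) \<in> T" using L[of L'] by (auto simp: L'_def)
        then show "\<exists>y. y \<in> (\<lambda>n. ext (f n)) ` A \<and> y \<in> T" using n(1) by blast
      qed simp
    qed
    then have "cyl \<eta> \<subseteq> cantor_top interior_of (cantor_top closure_of ((\<lambda>n. ext (f n)) ` A))"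
      using open_cyl unfolding interior_of_def by blast
    moreover have "ext \<eta> \<in> cyl \<eta>" by (rule ext_in_cyl) simp
    ultimately show False using A(2) unfolding nowhere_dense_cantor_def by blast
  qed
qed

end
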